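(* Let $\vartheta\in\mathbb R^d$, $X\sim\mathcal N(\vartheta,I_d/\lambda)$ with $\lambda>0$, $v\in\mathbb R^K$ and $W\in\mathbb R^{K\times d}$. Then $$\mathbb E\big[(\sigma(v\cdot g(WX))^2-\sigma(v\cdot g(W\vartheta))^2)^2\big]\vee\mathbb E\big[(\sigma'(v\cdot g(WX))-\sigma'(v\cdot g(W\vartheta)))^2\big]\le C_K\,\psi_3\Big(\frac1\lambda\|v\|^2\|W\|_F^2\Big),$$ where $\psi_3(x)=x(1+x)$ and $C_K$ depends only on $K$.
   Context: $g(t)=\max(t,0)$ is ReLU applied entrywise, $\sigma(t)=1/(1+e^{-t})$ is the sigmoid, $\|\cdot\|_F$ is the Frobenius norm, and $a\vee b=\max(a,b)$. *)

theory Defs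
  imports "HOL-Probability.Probability"
begin

definition sigmoid :: "real \<Rightarrow> real" where
  "sigmoid t = 1 / (1 + exp (- t))"

definition relu :: "real \<Rightarrow> real" where
  "relu t = max t 0"

text \<open>Gaussian N(theta, I_d / lambda) on R^d, vectors represented as nat => real
  with coordinates 0..d-1: product of independent N(theta_i, 1/lambda).\<close>
definition gauss_iso :: "nat \<Rightarrow> (nat \<Rightarrow> real) \<Rightarrow> real \<Rightarrow> (nat \<Rightarrow> real) measure" where
  "gauss_iso d \<theta> lam = PiM {..<d} (\<lambda>i. density lborel (normal_density (\<theta> i) (1 / sqrt lam)))"

definition net :: "nat \<Rightarrow> nat \<Rightarrow> (nat \<Rightarrow> real) \<Rightarrow> (nat \<Rightarrow> nat \<Rightarrow> real) \<Rightarrow> (nat \<Rightarrow> real) \<Rightarrow> real" where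
  "net K d v W x = (\<Sum>k<K. v k * relu (\<Sum>j<d. W k j * x j))"

definition psi3 :: "real \<Rightarrow> real" where
  "psi3 x = x * (1 + x)"

end

theory Submission imports Defs begin

lemma sigmoid_pos: "0 < sigmoid t" and sigmoid_lt1: "sigmoid t < 1"
  unfolding sigmoid_def by (auto simp: add_pos_pos)

lemma sigmoid_deriv: "(sigmoid has_field_derivative (sigmoid t * (1 - sigmoid t))) (at t)"
proof -
  have "((\<lambda>t. 1 / (1 + exp (- t))) has_field_derivative (exp (-t) / (1 + exp (-t))^2)) (at t)"
    by (auto intro!: derivative_eq_intros simp: power2_eq_square add_pos_pos)
       (metis add_pos_pos exp_gt_zero zero_less_one less_irrefl)
  moreover have "exp (-t) / (1 + exp (-t))^2 = sigmoid t * (1 - sigmoid t)"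
  proof -
    have e: "exp (-t) > 0" by simp
    show ?thesis unfolding sigmoid_def using e
      by (simp add: divide_simps power2_eq_square)
  qed
  ultimately show ?thesis unfolding sigmoid_def[abs_def] by simp
qed

lemma deriv_sigmoid: "deriv sigmoid t = sigmoid t * (1 - sigmoid t)"
  using sigmoid_deriv DERIV_imp_deriv by blast

lemma lip2:
  fixes f :: "real \<Rightarrow> real"
  assumes "\<And>t. (f has_field_derivative f' t) (at t)" "\<And>t. \<bar>f' t\<bar> \<le> 2"
  shows "(f a - f b)\<^sup>2 \<le> 4 * (a - b)\<^sup>2"
proof -
  have "norm (f a - f b) \<le> 2 * norm (a - b)"
    by (rule field_differentiable_bound[where S=UNIV]) (use assms in auto)
  hence "\<bar>f a - f b\<bar> \<le> 2 * \<bar>a - b\<bar>" by simp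
  hence "\<bar>f a - f b\<bar>^2 \<le> (2 * \<bar>a - b\<bar>)^2" by (rule power_mono) simp
  thus ?thesis by (simp add: power_mult_distrib)
qed

lemma lip_sig2: "((sigmoid a)\<^sup>2 - (sigmoid b)\<^sup>2)\<^sup>2 \<le> 4 * (a - b)\<^sup>2"
proof (rule lip2)
  fix t
  show "((\<lambda>t. (sigmoid t)\<^sup>2) has_field_derivative (2 * sigmoid t * (sigmoid t * (1 - sigmoid t)))) (at t)"
    by (auto intro!: derivative_eq_intros sigmoid_deriv)
  have "0 < sigmoid t" "sigmoid t < 1" by (rule sigmoid_pos, rule sigmoid_lt1)
  then show "\<bar>2 * sigmoid t * (sigmoid t * (1 - sigmoid t))\<bar> \<le> 2"
    by (simp add: abs_mult mult_le_one)
qed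

lemma lip_dsig: "(deriv sigmoid a - deriv sigmoid b)\<^sup>2 \<le> 4 * (a - b)\<^sup>2"
  unfolding deriv_sigmoid
proof (rule lip2)
  fix t
  show "((\<lambda>t. sigmoid t * (1 - sigmoid t)) has_field_derivative
      (sigmoid t * (1 - sigmoid t) * (1 - sigmoid t) - sigmoid t * (sigmoid t * (1 - sigmoid t)))) (at t)"
    by (auto intro!: derivative_eq_intros sigmoid_deriv)
  have "0 < sigmoid t" "sigmoid t < 1" by (rule sigmoid_pos, rule sigmoid_lt1)
  then show "\<bar>sigmoid t * (1 - sigmoid t) * (1 - sigmoid t) - sigmoid t * (sigmoid t * (1 - sigmoid t))\<bar> \<le> 2"
    by (smt (verit) mult_le_one mult_nonneg_nonneg)
qed

lemma relu_lip: "\<bar>relu a - relu b\<bar> \<le> \<bar>a - b\<bar>"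
  unfolding relu_def by auto

lemma net_diff:
  "(net K d v W x - net K d v W \<theta>)\<^sup>2 \<le> (\<Sum>k<K. (v k)\<^sup>2) * (\<Sum>k<K. (\<Sum>j<d. W k j * (x j - \<theta> j))\<^sup>2)"
proof -
  let ?c = "\<lambda>k. relu (\<Sum>j<d. W k j * x j) - relu (\<Sum>j<d. W k j * \<theta> j)"
  have "net K d v W x - net K d v W \<theta> = (\<Sum>k<K. v k * ?c k)"
    unfolding net_def by (simp add: sum_subtractf right_diff_distrib)
  hence "(net K d v W x - net K d v W \<theta>)\<^sup>2 \<le> (\<Sum>k<K. (v k)\<^sup>2) * (\<Sum>k<K. (?c k)\<^sup>2)"
    using Cauchy_Schwarz_ineq_sum by simp
  also have "\<dots> \<le> (\<Sum>k<K. (v k)\<^sup>2) * (\<Sum>k<K. (\<Sum>j<d. W k j * (x j - \<theta> j))\<^sup>2)"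
  proof (intro mult_left_mono sum_mono sum_nonneg)
    fix k
    have "\<bar>?c k\<bar> \<le> \<bar>(\<Sum>j<d. W k j * x j) - (\<Sum>j<d. W k j * \<theta> j)\<bar>" by (rule relu_lip)
    also have "(\<Sum>j<d. W k j * x j) - (\<Sum>j<d. W k j * \<theta> j) = (\<Sum>j<d. W k j * (x j - \<theta> j))"
      by (simp add: sum_subtractf right_diff_distrib)
    finally have "\<bar>?c k\<bar>^2 \<le> \<bar>\<Sum>j<d. W k j * (x j - \<theta> j)\<bar>^2" by (rule power_mono) simp
    thus "(?c k)\<^sup>2 \<le> (\<Sum>j<d. W k j * (x j - \<theta> j))\<^sup>2" by simp
  qed auto
  finally show ?thesis .
qed


locale gsetup =
  fixes s :: real and m :: real
  assumes s_pos: "0 < s"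
begin
abbreviation "N \<equiv> density lborel (normal_density m s)"

lemma int_N: "integrable N f \<longleftrightarrow> integrable lborel (\<lambda>x. normal_density m s x * f x)"
  if [measurable]: "f \<in> borel_measurable borel"
  by (rule integrable_real_density) auto

lemma integral_N: "integral\<^sup>L N f = (\<integral>x. normal_density m s x * f x \<partial>lborel)"
  if [measurable]: "f \<in> borel_measurable borel"
  by (rule integral_real_density) auto

lemma mom0: "integrable N (\<lambda>t. 1::real)" "(\<integral>t. 1 \<partial>N) = (1::real)"
proof -
  interpret prob_space N by (rule prob_space_normal_density[OF s_pos])
  show "integrable N (\<lambda>t. 1::real)" "(\<integral>t. 1 \<partial>N) = (1::real)" using prob_space by auto
qed

lemma mom1: "integrable N (\<lambda>t. t - m)" "(\<integral>t. (t - m) \<partial>N) = 0"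
proof -
  have h: "has_bochner_integral lborel (\<lambda>x. normal_density m s x * (x - m) ^ (2 * 0 + 1)) 0"
    by (rule normal_moment_odd[OF s_pos])
  show "integrable N (\<lambda>t. t - m)" using h by (subst int_N) (auto intro: integrable.intros)
  show "(\<integral>t. (t - m) \<partial>N) = 0" using h by (subst integral_N) (auto dest: has_bochner_integral_integral_eq)
qed

lemma mom2: "integrable N (\<lambda>t. (t - m) * (t - m))" "(\<integral>t. (t - m) * (t - m) \<partial>N) = s\<^sup>2"
proof -
  have h: "has_bochner_integral lborel (\<lambda>x. normal_density m s x * (x - m) ^ (2 * 1))
      (fact (2 * 1) / ((2 / s\<^sup>2)^1 * fact 1))"
    by (rule normal_moment_even[OF s_pos])
  have e: "(fact (2 * 1) / ((2 / s\<^sup>2)^1 * fact 1)) = s\<^sup>2" using s_pos by (simp add: numeral_2_eq_2)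
  have h': "has_bochner_integral lborel (\<lambda>x. normal_density m s x * ((x - m) * (x - m))) (s\<^sup>2)"
    using h unfolding e by (simp add: power2_eq_square)
  show "integrable N (\<lambda>t. (t - m) * (t - m))" using h' by (subst int_N) (auto intro: integrable.intros)
  show "(\<integral>t. (t - m) * (t - m) \<partial>N) = s\<^sup>2" using h' by (subst integral_N) (auto dest: has_bochner_integral_integral_eq)
qed
end

lemma gauss_prod:
  assumes lam: "lam > 0"
  shows "product_prob_space (\<lambda>i. density lborel (normal_density (\<theta> i) (1 / sqrt lam)))"
proof -
  have sp: "0 < 1 / sqrt lam" using lam by simp
  show ?thesis
  unfolding product_prob_space_def product_sigma_finite_def product_prob_space_axioms_def
  using prob_space_normal_density[OF sp] prob_space_imp_sigma_finite by blast
qed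

lemma gauss_cov:
  assumes lam: "lam > 0" and ij: "i < d" "j < d"
  shows "integrable (gauss_iso d \<theta> lam) (\<lambda>x. (x i - \<theta> i) * (x j - \<theta> j))"
    "(\<integral>x. (x i - \<theta> i) * (x j - \<theta> j) \<partial>gauss_iso d \<theta> lam) = (if i = j then 1 / lam else 0)"
proof -
  define M where "M = (\<lambda>i. density lborel (normal_density (\<theta> i) (1 / sqrt lam)))"
  interpret product_prob_space M using gauss_prod[OF lam] unfolding M_def .
  define f where "f = (\<lambda>l t. (if l = i then t - \<theta> l else 1) * (if l = j then t - \<theta> l else 1))"
  have G: "gauss_iso d \<theta> lam = PiM {..<d} M" unfolding gauss_iso_def M_def ..
  have eq: "(\<Prod>l\<in>{..<d}. f l (x l)) = (x i - \<theta> i) * (x j - \<theta> j)" for x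
    unfolding f_def prod.distrib using ij by (simp add: prod.delta)
  have sp: "0 < 1 / sqrt lam" using lam by simp
  have intf: "integrable (M l) (f l)" and intv: "integral\<^sup>L (M l) (f l) =
     (if l = i \<and> l = j then 1 / lam else if l = i \<or> l = j then 0 else 1)" for l
  proof -
    interpret g: gsetup "1 / sqrt lam" "\<theta> l" using sp by unfold_locales
    have "integrable (M l) (f l) \<and> integral\<^sup>L (M l) (f l) =
     (if l = i \<and> l = j then 1 / lam else if l = i \<or> l = j then 0 else 1)"
      using g.mom0 g.mom1 g.mom2 lam
      by (auto simp: f_def M_def power_divide)
    thus "integrable (M l) (f l)" "integral\<^sup>L (M l) (f l) =
     (if l = i \<and> l = j then 1 / lam else if l = i \<or> l = j then 0 else 1)" by auto
  qed
  have I: "integrable (PiM {..<d} M) (\<lambda>x. \<Prod>l\<in>{..<d}. f l (x l))"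
    by (rule product_integrable_prod) (auto intro: intf)
  show "integrable (gauss_iso d \<theta> lam) (\<lambda>x. (x i - \<theta> i) * (x j - \<theta> j))"
    using I unfolding G eq .
  have "(\<integral>x. (\<Prod>l\<in>{..<d}. f l (x l)) \<partial>PiM {..<d} M) = (\<Prod>l\<in>{..<d}. integral\<^sup>L (M l) (f l))"
    by (rule product_integral_prod) (auto intro: intf)
  also have "\<dots> = (if i = j then 1 / lam else 0)"
  proof (cases "i = j")
    case True
    have e: "(\<lambda>l. if l = i \<and> l = j then 1/lam else if l = i \<or> l = j then 0 else 1) = (\<lambda>l. if l = i then 1/lam else 1)"
      using True by auto
    show ?thesis unfolding intv e using ij True by (simp add: prod.delta)
  next
    case False
    have "(\<Prod>l<d. if l = i \<and> l = j then 1 / lam else if l = i \<or> l = j then 0 else 1) = (0::real)"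
      by (rule prod_zero) (use ij False in auto)
    thus ?thesis unfolding intv using False by simp
  qed
  finally show "(\<integral>x. (x i - \<theta> i) * (x j - \<theta> j) \<partial>gauss_iso d \<theta> lam) = (if i = j then 1 / lam else 0)"
    unfolding G eq .
qed


lemma gauss_quad:
  fixes a :: "nat \<Rightarrow> real"
  assumes lam: "lam > 0"
  shows "integrable (gauss_iso d \<theta> lam) (\<lambda>x. (\<Sum>j<d. a j * (x j - \<theta> j))\<^sup>2)"
    "(\<integral>x. (\<Sum>j<d. a j * (x j - \<theta> j))\<^sup>2 \<partial>gauss_iso d \<theta> lam) = (\<Sum>j<d. (a j)\<^sup>2) / lam"
proof -
  have eq: "(\<Sum>j<d. a j * (x j - \<theta> j))\<^sup>2 = (\<Sum>i<d. \<Sum>j<d. (a i * a j) * ((x i - \<theta> i) * (x j - \<theta> j)))" for x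
    unfolding power2_eq_square sum_product by (simp add: ac_simps)
  show "integrable (gauss_iso d \<theta> lam) (\<lambda>x. (\<Sum>j<d. a j * (x j - \<theta> j))\<^sup>2)"
    unfolding eq by (auto intro!: integrable_sum integrable_mult_right gauss_cov[OF lam])
  have "(\<integral>x. (\<Sum>j<d. a j * (x j - \<theta> j))\<^sup>2 \<partial>gauss_iso d \<theta> lam)
     = (\<Sum>i<d. \<Sum>j<d. (a i * a j) * (if i = j then 1 / lam else 0))"
  proof -
    have ii: "integrable (gauss_iso d \<theta> lam) (\<lambda>x. (a i * a j) * ((x i - \<theta> i) * (x j - \<theta> j)))"
      if "i < d" "j < d" for i j using that by (auto intro!: integrable_mult_right gauss_cov[OF lam])
    have "(\<integral>x. (\<Sum>i<d. \<Sum>j<d. (a i * a j) * ((x i - \<theta> i) * (x j - \<theta> j))) \<partial>gauss_iso d \<theta> lam)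
       = (\<Sum>i<d. \<integral>x. (\<Sum>j<d. (a i * a j) * ((x i - \<theta> i) * (x j - \<theta> j))) \<partial>gauss_iso d \<theta> lam)"
      by (subst Bochner_Integration.integral_sum) (auto intro!: integrable_sum ii)
    also have "\<dots> = (\<Sum>i<d. \<Sum>j<d. \<integral>x. (a i * a j) * ((x i - \<theta> i) * (x j - \<theta> j)) \<partial>gauss_iso d \<theta> lam)"
      by (rule sum.cong, simp, subst Bochner_Integration.integral_sum) (auto intro!: ii simp: gauss_cov[OF lam])
    also have "\<dots> = (\<Sum>i<d. \<Sum>j<d. (a i * a j) * (if i = j then 1 / lam else 0))"
      by (intro sum.cong refl) (simp add: gauss_cov[OF lam])
    finally show ?thesis unfolding eq .
  qed
  also have "\<dots> = (\<Sum>j<d. (a j)\<^sup>2) / lam"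
    by (simp add: if_distrib sum.delta sum_divide_distrib power2_eq_square cong: if_cong)
  finally show "(\<integral>x. (\<Sum>j<d. a j * (x j - \<theta> j))\<^sup>2 \<partial>gauss_iso d \<theta> lam) = (\<Sum>j<d. (a j)\<^sup>2) / lam" .
qed

theorem lemma4p3:
  fixes K :: nat
  shows "\<exists>C::real. \<forall>(d::nat) (\<theta>::nat \<Rightarrow> real) (lam::real) (v::nat \<Rightarrow> real) (W::nat \<Rightarrow> nat \<Rightarrow> real).
     lam > 0 \<longrightarrow>
     max (\<integral>x. ((sigmoid (net K d v W x))\<^sup>2 - (sigmoid (net K d v W \<theta>))\<^sup>2)\<^sup>2 \<partial>gauss_iso d \<theta> lam)
         (\<integral>x. (deriv sigmoid (net K d v W x) - deriv sigmoid (net K d v W \<theta>))\<^sup>2 \<partial>gauss_iso d \<theta> lam)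
     \<le> C * psi3 ((1 / lam) * (\<Sum>k<K. (v k)\<^sup>2) * (\<Sum>k<K. \<Sum>j<d. (W k j)\<^sup>2))"
proof (intro exI[of _ 4] allI impI)
  fix d :: nat and \<theta> :: "nat \<Rightarrow> real" and lam :: real and v :: "nat \<Rightarrow> real" and W :: "nat \<Rightarrow> nat \<Rightarrow> real" assume lam: "(lam::real) > 0"
  define M where "M = gauss_iso d \<theta> lam"
  define V where "V = (\<Sum>k<K. (v k)\<^sup>2)"
  define F where "F = (\<Sum>k<K. \<Sum>j<d. (W k j)\<^sup>2)"
  define B where "B = (\<lambda>x. 4 * (V * (\<Sum>k<K. (\<Sum>j<d. W k j * (x j - \<theta> j))\<^sup>2)))"
  have V0: "V \<ge> 0" unfolding V_def by (simp add: sum_nonneg)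
  have F0: "F \<ge> 0" unfolding F_def by (simp add: sum_nonneg)
  have intB: "integrable M B" unfolding B_def M_def
    by (auto intro!: integrable_mult_right integrable_sum gauss_quad[OF lam])
  have IB: "integral\<^sup>L M B = 4 * (V * F / lam)" unfolding B_def M_def F_def
    by (simp add: Bochner_Integration.integral_sum gauss_quad[OF lam] flip: sum_divide_distrib)
  have B0: "0 \<le> B x" for x unfolding B_def using V0 by (simp add: sum_nonneg)
  have pw: "4 * (net K d v W x - net K d v W \<theta>)\<^sup>2 \<le> B x" for x
    using net_diff[of K d v W x \<theta>] unfolding B_def V_def by simp
  have I1: "(\<integral>x. ((sigmoid (net K d v W x))\<^sup>2 - (sigmoid (net K d v W \<theta>))\<^sup>2)\<^sup>2 \<partial>M) \<le> integral\<^sup>L M B"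
    by (rule integral_mono'[OF intB]) (use lip_sig2 pw order_trans B0 in blast)+
  have I2: "(\<integral>x. (deriv sigmoid (net K d v W x) - deriv sigmoid (net K d v W \<theta>))\<^sup>2 \<partial>M) \<le> integral\<^sup>L M B"
    by (rule integral_mono'[OF intB]) (use lip_dsig pw order_trans B0 in blast)+
  define S where "S = (1 / lam) * V * F"
  have S0: "S \<ge> 0" unfolding S_def using lam V0 F0 by simp
  have "integral\<^sup>L M B = 4 * S" unfolding IB S_def by simp
  moreover have "S \<le> psi3 S" unfolding psi3_def using S0 by (simp add: distrib_left)
  ultimately have "integral\<^sup>L M B \<le> 4 * psi3 S" by simp
  with I1 I2 show "max (\<integral>x. ((sigmoid (net K d v W x))\<^sup>2 - (sigmoid (net K d v W \<theta>))\<^sup>2)\<^sup>2 \<partial>gauss_iso d \<theta> lam)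
         (\<integral>x. (deriv sigmoid (net K d v W x) - deriv sigmoid (net K d v W \<theta>))\<^sup>2 \<partial>gauss_iso d \<theta> lam)
     \<le> 4 * psi3 ((1 / lam) * (\<Sum>k<K. (v k)\<^sup>2) * (\<Sum>k<K. \<Sum>j<d. (W k j)\<^sup>2))"
    unfolding M_def S_def V_def F_def by simp
qed

end
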